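(* Let $\phi$ be a Young function and let $f,g:\mathbb{R}^{N}\rightarrow [0,\infty ]$ be Borel measurable with $\sup f=\sup g$ (possibly $\infty$). Then $f\barwedge g$ is measurable and $$\max\{\|f\|_{\phi },\|g\|_{\phi }\}\leq \|f\barwedge g\|_{\phi }.$$
   Context: $(f\barwedge g)(x):=\sup_{y}\min\{f(x-y),g(y)\}$. A Young function is a nonconstant $\phi:[0,\infty]\to[0,\infty]$ with $\phi(0)=0$, nondecreasing, convex and left continuous; $\|h\|_{\phi}:=\inf\{r>0:\int_{\mathbb{R}^N}\phi(r^{-1}|h|)\le 1\}$ ($=\infty$ if no such $r$). Measurability means Lebesgue measurability. *)

theory Defs
  imports "HOL-Analysis.Analysis"
begin

definition supmin_conv :: "('a::euclidean_space \<Rightarrow> ennreal) \<Rightarrow> ('a \<Rightarrow> ennreal) \<Rightarrow> 'a \<Rightarrow> ennreal" where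
  "supmin_conv f g x = (SUP y. min (f (x - y)) (g y))"

definition young_function :: "(ennreal \<Rightarrow> ennreal) \<Rightarrow> bool" where
  "young_function \<phi> \<longleftrightarrow>
     (\<exists>s t. \<phi> s \<noteq> \<phi> t) \<and> \<phi> 0 = 0 \<and> mono \<phi> \<and>
     (\<forall>a b (l::real). 0 \<le> l \<and> l \<le> 1 \<longrightarrow>
        \<phi> (ennreal l * a + ennreal (1 - l) * b) \<le> ennreal l * \<phi> a + ennreal (1 - l) * \<phi> b) \<and>
     (\<forall>t>0. (\<phi> \<longlongrightarrow> \<phi> t) (at_left t))"

text \<open>Luxemburg norm; Inf of the empty set in ennreal is \<infinity>.\<close>
definition luxemburg :: "(ennreal \<Rightarrow> ennreal) \<Rightarrow> ('a::euclidean_space \<Rightarrow> ennreal) \<Rightarrow> ennreal" where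
  "luxemburg \<phi> h = Inf {ennreal r | r. r > 0 \<and> (\<integral>\<^sup>+ x. \<phi> (h x / ennreal r) \<partial>lebesgue) \<le> 1}"

end

theory Submission
  imports Defs
begin


lemma hull_exists:
  assumes TU: "T \<subseteq> U" and U: "U \<in> sets M" and fin: "emeasure M U < \<infinity>"
  shows "\<exists>H\<in>sets M. T \<subseteq> H \<and> H \<subseteq> U \<and> (\<forall>V\<in>sets M. T \<subseteq> V \<longrightarrow> H - V \<in> null_sets M)"
proof -
  define C where "C = {V \<in> sets M. T \<subseteq> V \<and> V \<subseteq> U}"
  define m where "m = Inf (measure M ` C)"
  have UC: "U \<in> C" using TU U by (auto simp: C_def)
  have bdd: "bdd_below (measure M ` C)" by (auto intro!: bdd_belowI[of _ 0])
  have finC: "emeasure M V \<noteq> \<infinity>" if "V \<subseteq> U" for V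
    using emeasure_mono[OF that U] fin by (auto simp: top_unique)
  have "\<forall>k::nat. \<exists>V\<in>C. measure M V < m + 1 / (real k + 1)"
  proof
    fix k :: nat
    have "Inf (measure M ` C) < m + 1 / (real k + 1)" unfolding m_def by simp
    from cInf_lessD[OF _ this] UC obtain z where "z \<in> measure M ` C" "z < m + 1 / (real k + 1)" by blast
    then show "\<exists>V\<in>C. measure M V < m + 1 / (real k + 1)" by blast
  qed
  then obtain V where V: "\<And>k. V k \<in> C" "\<And>k. measure M (V k) < m + 1 / (real k + 1)"
    by metis
  define H where "H = U \<inter> (\<Inter>k. V k)"
  have Hs: "H \<in> sets M" using V(1) U by (auto simp: H_def C_def)
  have HC: "H \<in> C" using V(1) U Hs TU by (auto simp: H_def C_def)
  have "measure M H \<le> m"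
  proof (rule field_le_epsilon)
    fix e :: real assume "0 < e"
    then obtain k :: nat where k: "1 / (real k + 1) < e"
      by (metis add.commute nat_approx_posE of_nat_Suc)
    have "measure M H \<le> measure M (V k)"
      using V(1)[of k] Hs finC[of "V k"]
      by (intro measure_mono_fmeasurable) (auto simp: H_def C_def fmeasurable_def less_top)
    with V(2)[of k] k show "measure M H \<le> m + e" by linarith
  qed
  show ?thesis
  proof (intro bexI conjI ballI impI)
    show "T \<subseteq> H" "H \<subseteq> U" using HC by (auto simp: C_def)
    show "H \<in> sets M" by (rule Hs)
    fix W assume W: "W \<in> sets M" "T \<subseteq> W"
    have HW: "H \<inter> W \<in> C" using HC W by (auto simp: C_def)
    then have "m \<le> measure M (H \<inter> W)" unfolding m_def using bdd by (rule cInf_lower[OF imageI])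
    have finH: "emeasure M H \<noteq> \<infinity>" using HC finC by (auto simp: C_def)
    have "measure M (H - W) = measure M H - measure M (H \<inter> W)"
    proof -
      have "H - W = H - (H \<inter> W)" by auto
      then show ?thesis using measure_Diff[OF finH Hs, of "H \<inter> W"] HW by (auto simp: C_def)
    qed
    moreover have "measure M (H \<inter> W) \<le> measure M H"
      using HW finH Hs by (intro measure_mono_fmeasurable) (auto simp: C_def fmeasurable_def less_top)
    ultimately have "measure M (H - W) = 0"
      using \<open>m \<le> measure M (H \<inter> W)\<close> \<open>measure M H \<le> m\<close> by linarith
    moreover have "emeasure M (H - W) \<noteq> \<infinity>" using finC[of "H - W"] HC by (auto simp: C_def)
    ultimately have "emeasure M (H - W) = 0" using emeasure_eq_ennreal_measure by fastforce
    then show "H - W \<in> null_sets M" using Hs W by auto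
  qed
qed

definition suslin :: "(nat list \<Rightarrow> 'b set) \<Rightarrow> 'b set" where
  "suslin K = (\<Union>\<sigma>. \<Inter>n. K (map \<sigma> [0..<Suc n]))"

lemma suslin_lebesgue_bounded:
  fixes F :: "nat list \<Rightarrow> 'a::euclidean_space set"
  assumes Fs: "\<And>s. F s \<in> sets lebesgue" and FW: "\<And>s. F s \<subseteq> W"
    and W: "W \<in> sets lebesgue" and finW: "emeasure lebesgue W < \<infinity>"
  shows "suslin F \<in> sets lebesgue"
proof -
  define S where "S s = (\<Union>\<sigma>\<in>{\<sigma>. map \<sigma> [0..<length s] = s}. \<Inter>n. F (map \<sigma> [0..<Suc n]))" for s
  define U where "U s = (if s = [] then W else F s)" for s
  have Us: "U s \<in> sets lebesgue" for s using Fs W by (auto simp: U_def)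
  have finU: "emeasure lebesgue (U s) < \<infinity>" for s
    using finW emeasure_mono[OF FW W] by (auto simp: U_def intro: order.strict_trans1)
  have SU: "S s \<subseteq> U s" for s
  proof (cases s)
    case Nil then show ?thesis using FW by (auto simp: S_def U_def)
  next
    case (Cons a s')
    show ?thesis
    proof
      fix x assume "x \<in> S s"
      then obtain \<sigma> where "map \<sigma> [0..<length s] = s" "\<And>n. x \<in> F (map \<sigma> [0..<Suc n])"
        by (auto simp: S_def)
      then show "x \<in> U s" using Cons by (auto simp: U_def) (metis length_Cons)
    qed
  qed
  have "\<forall>s. \<exists>H\<in>sets lebesgue. S s \<subseteq> H \<and> H \<subseteq> U s \<and>
      (\<forall>V\<in>sets lebesgue. S s \<subseteq> V \<longrightarrow> H - V \<in> null_sets lebesgue)"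
    using hull_exists[OF SU Us finU] by blast
  then obtain H where H: "\<And>s. H s \<in> sets lebesgue" "\<And>s. S s \<subseteq> H s" "\<And>s. H s \<subseteq> U s"
    "\<And>s V. V \<in> sets lebesgue \<Longrightarrow> S s \<subseteq> V \<Longrightarrow> H s - V \<in> null_sets lebesgue"
    by metis
  define D where "D s = H s - (\<Union>k. H (s @ [k]))" for s
  have Sstep: "S s \<subseteq> (\<Union>k. S (s @ [k]))" for s
  proof
    fix x assume "x \<in> S s"
    then obtain \<sigma> where \<sigma>: "map \<sigma> [0..<length s] = s" "\<And>n. x \<in> F (map \<sigma> [0..<Suc n])"
      by (auto simp: S_def)
    have "map \<sigma> [0..<length (s @ [\<sigma> (length s)])] = s @ [\<sigma> (length s)]" using \<sigma>(1) by simp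
    then show "x \<in> (\<Union>k. S (s @ [k]))" using \<sigma>(2) unfolding S_def by blast
  qed
  have Dnull: "D s \<in> null_sets lebesgue" for s
    unfolding D_def
  proof (rule H(4))
    show "(\<Union>k. H (s @ [k])) \<in> sets lebesgue" using H(1) by auto
    show "S s \<subseteq> (\<Union>k. H (s @ [k]))" using Sstep H(2) by blast
  qed
  have Nnull: "(\<Union>s. D s) \<in> null_sets lebesgue"
    by (rule null_sets_UN') (auto simp: Dnull)
  have S0: "S [] = suslin F" by (simp add: S_def suslin_def)
  have key: "H [] - (\<Union>s. D s) \<subseteq> suslin F"
  proof
    fix x assume x: "x \<in> H [] - (\<Union>s. D s)"
    have step: "x \<in> H s \<Longrightarrow> \<exists>k. x \<in> H (s @ [k])" for s using x by (auto simp: D_def)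
    define nxt where "nxt s = (SOME k. x \<in> H (s @ [k]))" for s
    have nxt: "x \<in> H s \<Longrightarrow> x \<in> H (s @ [nxt s])" for s
      unfolding nxt_def by (rule someI_ex) (rule step)
    define L where "L n = rec_nat [] (\<lambda>_ l. l @ [nxt l]) n" for n
    have L0: "L 0 = []" and LS: "L (Suc n) = L n @ [nxt (L n)]" for n by (simp_all add: L_def)
    have LH: "x \<in> H (L n) \<and> length (L n) = n" for n
      by (induction n) (use x nxt in \<open>auto simp: L0 LS\<close>)
    define \<sigma> where "\<sigma> n = nxt (L n)" for n
    have mapL: "map \<sigma> [0..<n] = L n" for n
      by (induction n) (auto simp: L0 LS \<sigma>_def)
    have "x \<in> F (map \<sigma> [0..<Suc n])" for n
      using LH[of "Suc n"] H(3)[of "L (Suc n)"] by (auto simp: mapL U_def LS \<sigma>_def)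
    then show "x \<in> suslin F" by (auto simp: suslin_def)
  qed
  have sub: "H [] - suslin F \<in> null_sets lebesgue"
    by (rule null_sets_completion_subset[OF _ Nnull]) (use key in blast)
  have "suslin F = H [] - (H [] - suslin F)" using H(2)[of "[]"] S0 by auto
  also have "\<dots> \<in> sets lebesgue" using H(1) sub by auto
  finally show ?thesis .
qed

lemma suslin_lebesgue:
  fixes F :: "nat list \<Rightarrow> 'a::euclidean_space set"
  assumes Fs: "\<And>s. F s \<in> sets lebesgue"
  shows "suslin F \<in> sets lebesgue"
proof -
  have eq: "suslin F = (\<Union>k::nat. suslin (\<lambda>s. F s \<inter> ball 0 (real k)))"
  proof
    show "suslin F \<subseteq> (\<Union>k::nat. suslin (\<lambda>s. F s \<inter> ball 0 (real k)))"
    proof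
      fix x assume "x \<in> suslin F"
      moreover obtain k :: nat where "norm x < real k" using reals_Archimedean2 by blast
      ultimately show "x \<in> (\<Union>k::nat. suslin (\<lambda>s. F s \<inter> ball 0 (real k)))"
        by (auto simp: suslin_def)
    qed
  qed (auto simp: suslin_def)
  have "suslin (\<lambda>s. F s \<inter> ball 0 (real k)) \<in> sets lebesgue" for k :: nat
    using lmeasurable_ball[of 0 "real k"]
    by (intro suslin_lebesgue_bounded[where W="ball 0 (real k)"])
       (auto simp: Fs fmeasurable_def)
  then show ?thesis unfolding eq by auto
qed



definition SuK :: "'b::topological_space set \<Rightarrow> bool" where
  "SuK A \<longleftrightarrow> (\<exists>K. (\<forall>s. compact (K s)) \<and> A = suslin K)"

lemma SuK_compact: "compact C \<Longrightarrow> SuK C"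
  unfolding SuK_def by (rule exI[of _ "\<lambda>_. C"]) (auto simp: suslin_def)

lemma SuK_UN:
  assumes "\<And>i::nat. SuK (A i)"
  shows "SuK (\<Union>i. A i)"
proof -
  have "\<forall>i. \<exists>K. (\<forall>s. compact (K s)) \<and> A i = suslin K" using assms unfolding SuK_def by blast
  from choice[OF this] obtain K where K0: "\<forall>i. (\<forall>s. compact (K i s)) \<and> A i = suslin (K i)"
    by blast
  then have K: "\<And>i s. compact (K i s)" "\<And>i. A i = suslin (K i)" by auto
  define K' where "K' s = (case s of [] \<Rightarrow> {} | c # s' \<Rightarrow> K (fst (prod_decode c)) (snd (prod_decode c) # s'))" for s
  have cK': "compact (K' s)" for s by (cases s) (auto simp: K'_def K)
  have "suslin K' = (\<Union>i. suslin (K i))"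
  proof
    show "suslin K' \<subseteq> (\<Union>i. suslin (K i))"
    proof
      fix x assume "x \<in> suslin K'"
      then obtain \<sigma> where \<sigma>: "\<And>n. x \<in> K' (map \<sigma> [0..<Suc n])" by (auto simp: suslin_def)
      define i where "i = fst (prod_decode (\<sigma> 0))"
      define \<tau> where "\<tau> = case_nat (snd (prod_decode (\<sigma> 0))) (\<lambda>m. \<sigma> (Suc m))"
      have "x \<in> K i (map \<tau> [0..<Suc n])" for n
      proof -
        have e1: "map \<sigma> [0..<Suc n] = \<sigma> 0 # map (\<lambda>m. \<sigma> (Suc m)) [0..<n]" by (rule map_upt_Suc)
        have e2: "map \<tau> [0..<Suc n] = snd (prod_decode (\<sigma> 0)) # map (\<lambda>m. \<sigma> (Suc m)) [0..<n]"
          unfolding map_upt_Suc by (simp add: \<tau>_def)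
        show ?thesis using \<sigma>[of n] unfolding e1 e2 by (simp add: K'_def i_def)
      qed
      then show "x \<in> (\<Union>i. suslin (K i))" by (auto simp: suslin_def)
    qed
    show "(\<Union>i. suslin (K i)) \<subseteq> suslin K'"
    proof
      fix x assume "x \<in> (\<Union>i. suslin (K i))"
      then obtain i \<tau> where \<tau>: "\<And>n. x \<in> K i (map \<tau> [0..<Suc n])" by (auto simp: suslin_def)
      define \<sigma> where "\<sigma> = case_nat (prod_encode (i, \<tau> 0)) (\<lambda>m. \<tau> (Suc m))"
      have "x \<in> K' (map \<sigma> [0..<Suc n])" for n
      proof -
        have e1: "map \<tau> [0..<Suc n] = \<tau> 0 # map (\<lambda>m. \<tau> (Suc m)) [0..<n]" by (rule map_upt_Suc)
        have e2: "map \<sigma> [0..<Suc n] = prod_encode (i, \<tau> 0) # map (\<lambda>m. \<tau> (Suc m)) [0..<n]"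
          unfolding map_upt_Suc by (simp add: \<sigma>_def)
        show ?thesis using \<tau>[of n] unfolding e1 e2 by (simp add: K'_def)
      qed
      then show "x \<in> suslin K'" by (auto simp: suslin_def)
    qed
  qed
  then have "(\<Union>i. A i) = suslin K'" using K(2) by simp
  then show ?thesis unfolding SuK_def using cK' by blast
qed


lemma prod_encode_mono2: assumes "k \<le> j" shows "prod_encode (i, k) \<le> prod_encode (i, j)"
proof -
  have "(i + k) * Suc (i + k) div 2 \<le> (i + j) * Suc (i + j) div 2"
    using \<open>k \<le> j\<close> by (intro div_le_mono mult_le_mono) auto
  then show ?thesis unfolding prod_encode_def triangle_def by simp
qed

lemma SuK_INT:
  assumes "\<And>i::nat. SuK (A i)"
  shows "SuK (\<Inter>i. A i)"
proof -
  have "\<forall>i. \<exists>K. (\<forall>s. compact (K s)) \<and> A i = suslin K" using assms unfolding SuK_def by blast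
  from choice[OF this] obtain K where K0: "\<forall>i. (\<forall>s. compact (K i s)) \<and> A i = suslin (K i)"
    by blast
  then have K: "\<And>i s. compact (K i s)" "\<And>i. A i = suslin (K i)" by auto
  define K' where "K' s = (case prod_decode (length s - 1) of (i, j) \<Rightarrow>
       K i (map (\<lambda>k. s ! prod_encode (i, k)) [0..<Suc j]))" for s
  have cK': "compact (K' s)" for s by (auto simp: K'_def K split: prod.split)
  have K'eq: "K' (map \<sigma> [0..<Suc (prod_encode (i, j))]) = K i (map (\<lambda>k. \<sigma> (prod_encode (i, k))) [0..<Suc j])"
    for \<sigma> i j
  proof -
    have eq: "map (\<lambda>k. map \<sigma> [0..<Suc (prod_encode (i, j))] ! prod_encode (i, k)) [0..<Suc j]
        = map (\<lambda>k. \<sigma> (prod_encode (i, k))) [0..<Suc j]"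
      using prod_encode_mono2[of _ j i]
      by (intro map_cong) (auto simp del: upt_Suc simp: nth_map_upt less_Suc_eq_le)
    have "K' (map \<sigma> [0..<Suc (prod_encode (i, j))]) = K i (map (\<lambda>k. map \<sigma> [0..<Suc (prod_encode (i, j))] ! prod_encode (i, k)) [0..<Suc j])"
      by (simp add: K'_def del: upt_Suc)
    also have "\<dots> = K i (map (\<lambda>k. \<sigma> (prod_encode (i, k))) [0..<Suc j])"
      by (rule arg_cong[OF eq])
    finally show ?thesis .
  qed
  have "suslin K' = (\<Inter>i. suslin (K i))"
  proof
    show "suslin K' \<subseteq> (\<Inter>i. suslin (K i))"
    proof
      fix x assume "x \<in> suslin K'"
      then obtain \<sigma> where \<sigma>: "\<And>n. x \<in> K' (map \<sigma> [0..<Suc n])" by (auto simp: suslin_def)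
      have "x \<in> suslin (K i)" for i
      proof -
        have "x \<in> K i (map (\<lambda>k. \<sigma> (prod_encode (i, k))) [0..<Suc j])" for j
          using \<sigma>[of "prod_encode (i, j)"] K'eq[of \<sigma> i j] by (simp del: upt_Suc)
        then show ?thesis by (auto simp: suslin_def)
      qed
      then show "x \<in> (\<Inter>i. suslin (K i))" by auto
    qed
    show "(\<Inter>i. suslin (K i)) \<subseteq> suslin K'"
    proof
      fix x assume "x \<in> (\<Inter>i. suslin (K i))"
      then have "\<forall>i. \<exists>\<tau>. \<forall>n. x \<in> K i (map \<tau> [0..<Suc n])" by (auto simp: suslin_def)
      then obtain \<tau> where \<tau>: "\<And>i n. x \<in> K i (map (\<tau> i) [0..<Suc n])" by metis
      define \<sigma> where "\<sigma> m = (case prod_decode m of (i, j) \<Rightarrow> \<tau> i j)" for m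
      have "x \<in> K' (map \<sigma> [0..<Suc n])" for n
      proof -
        obtain i j where "prod_decode n = (i, j)" by (cases "prod_decode n")
        then have n: "n = prod_encode (i, j)" by (metis prod_decode_inverse)
        have "map (\<lambda>k. \<sigma> (prod_encode (i, k))) [0..<Suc j] = map (\<tau> i) [0..<Suc j]"
          by (simp add: \<sigma>_def del: upt_Suc)
        then show ?thesis using \<tau>[of i j] K'eq[of \<sigma> i j] n by (simp only:)
      qed
      then show "x \<in> suslin K'" by (auto simp: suslin_def)
    qed
  qed
  then have "(\<Inter>i. A i) = suslin K'" using K(2) by simp
  then show ?thesis unfolding SuK_def using cK' by blast
qed

lemma SuK_empty: "SuK {}" by (rule SuK_compact) simp

lemma SuK_open:
  fixes S :: "'a::euclidean_space set"
  assumes "open S" shows "SuK S"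
proof -
  obtain D where D: "countable D" "\<And>X. X \<in> D \<Longrightarrow> \<exists>a b. X = cbox a b" "\<Union>D = S"
    using open_countable_Union_open_cbox[OF assms] by metis
  show ?thesis
  proof (cases "D = {}")
    case True then show ?thesis using D SuK_empty by auto
  next
    case False
    have "S = (\<Union>i. from_nat_into D i)" using D(3) range_from_nat_into[OF False D(1)] by auto
    moreover have "SuK (from_nat_into D i)" for i
      using D(2)[OF from_nat_into[OF False]] by (metis compact_cbox SuK_compact)
    ultimately show ?thesis using SuK_UN by metis
  qed
qed

lemma SuK_closed:
  fixes S :: "'a::euclidean_space set"
  assumes "closed S" shows "SuK S"
proof -
  have "S = (\<Union>k::nat. S \<inter> cball 0 (real k))"
  proof
    show "S \<subseteq> (\<Union>k::nat. S \<inter> cball 0 (real k))"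
    proof
      fix x assume "x \<in> S"
      moreover obtain k :: nat where "norm x \<le> real k" using real_arch_simple by blast
      ultimately show "x \<in> (\<Union>k::nat. S \<inter> cball 0 (real k))" by auto
    qed
  qed auto
  moreover have "SuK (S \<inter> cball 0 (real k))" for k
    by (intro SuK_compact compact_Int_closed[OF _ assms] ) (auto intro: compact_Int_closed assms)
  ultimately show ?thesis using SuK_UN by metis
qed

lemma SuK_borel:
  fixes A :: "'a::euclidean_space set"
  assumes "A \<in> sets borel" shows "SuK A \<and> SuK (- A)"
proof -
  have "A \<in> sigma_sets UNIV {S. open S}" using assms sets_borel by auto
  then show ?thesis
  proof induction
    case (Basic a) then show ?case by (auto intro: SuK_open SuK_closed)
  next
    case Empty then show ?case using SuK_empty SuK_compact[of "UNIV::'a set"]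
      by (auto intro: SuK_closed)
  next
    case (Compl a) then show ?case by (simp add: Compl_eq_Diff_UNIV[symmetric])
  next
    case (Union a) then show ?case by (auto intro: SuK_UN SuK_INT)
  qed
qed



lemma fst_INT_compact:
  fixes C :: "nat \<Rightarrow> ('a::t2_space \<times> 'b::t2_space) set"
  assumes cC: "\<And>n. compact (C n)" and dec: "\<And>n. C (Suc n) \<subseteq> C n"
    and x: "\<And>n. x \<in> fst ` C n"
  shows "x \<in> fst ` (\<Inter>n. C n)"
proof -
  define D where "D n = C n \<inter> ({x} \<times> UNIV)" for n
  have cD: "compact (D n)" for n
    unfolding D_def by (intro compact_Int_closed cC closed_Times) auto
  have decD: "D m \<subseteq> D n" if "n \<le> m" for n m
    using lift_Suc_antimono_le[of D, OF _ that] dec by (auto simp: D_def)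
  have neD: "D n \<noteq> {}" for n using x[of n] by (force simp: D_def)
  have "D 0 \<inter> \<Inter> (D ` UNIV) \<noteq> {}"
  proof (rule compact_imp_fip_image[OF cD])
    show "closed (D i)" for i using cD by (rule compact_imp_closed)
    fix I' :: "nat set" assume "finite I'"
    define m where "m = Max (insert 0 I')"
    have "D m \<subseteq> D i" if "i \<in> insert 0 I'" for i
      using decD[of i m] Max_ge[of "insert 0 I'" i] \<open>finite I'\<close> that by (auto simp: m_def)
    then have "D m \<subseteq> D 0 \<inter> \<Inter> (D ` I')" by blast
    then show "D 0 \<inter> \<Inter> (D ` I') \<noteq> {}" using neD[of m] by blast
  qed
  then obtain p where "\<And>n. p \<in> D n" by blast
  then have "p \<in> C n \<and> p \<in> {x} \<times> UNIV" for n by (simp add: D_def)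
  then have "p \<in> (\<Inter>n. C n)" "fst p = x" by (auto simp: mem_Times_iff)
  then show ?thesis by (metis image_eqI)
qed

lemma take_map_upt: "k \<le> m \<Longrightarrow> take k (map \<sigma> [0..<m]) = map \<sigma> [0..<k]"
  by (simp add: take_map take_upt)

lemma SuK_fst_lebesgue:
  fixes E :: "('a::euclidean_space \<times> 'a) set"
  assumes "SuK E"
  shows "fst ` E \<in> sets lebesgue"
proof -
  obtain K where cK: "\<And>s. compact (K s)" and E: "E = suslin K"
    using assms unfolding SuK_def by blast
  define K' where "K' s = K s \<inter> (\<Inter>k\<in>{1..length s}. K (take k s))" for s
  have cK': "compact (K' s)" for s
    unfolding K'_def by (intro compact_Int_closed cK closed_INT ballI compact_imp_closed)
  have Ceq: "K' (map \<sigma> [0..<Suc n]) = K (map \<sigma> [0..<Suc n]) \<inter> (\<Inter>k\<in>{1..Suc n}. K (map \<sigma> [0..<k]))"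
    for \<sigma> n
    unfolding K'_def by (intro arg_cong2[where f="(\<inter>)"] refl INF_cong) (auto simp del: upt_Suc simp: take_map_upt)
  have I: "(\<Inter>n. K' (map \<sigma> [0..<Suc n])) = (\<Inter>n. K (map \<sigma> [0..<Suc n]))" for \<sigma>
  proof
    show "(\<Inter>n. K' (map \<sigma> [0..<Suc n])) \<subseteq> (\<Inter>n. K (map \<sigma> [0..<Suc n]))"
      unfolding Ceq by (auto simp del: upt_Suc)
    show "(\<Inter>n. K (map \<sigma> [0..<Suc n])) \<subseteq> (\<Inter>n. K' (map \<sigma> [0..<Suc n]))"
    proof
      fix x assume x: "x \<in> (\<Inter>n. K (map \<sigma> [0..<Suc n]))"
      have "x \<in> K (map \<sigma> [0..<k])" if "k \<in> {1..Suc n}" for k n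
        using x[THEN INT_D, of "k - 1"] that by (simp del: upt_Suc)
      then show "x \<in> (\<Inter>n. K' (map \<sigma> [0..<Suc n]))" unfolding Ceq using x by (auto simp del: upt_Suc)
    qed
  qed
  have dec: "K' (map \<sigma> [0..<Suc (Suc n)]) \<subseteq> K' (map \<sigma> [0..<Suc n])" for \<sigma> n
    unfolding Ceq by (auto simp del: upt_Suc)
  have "fst ` E = suslin (\<lambda>s. fst ` K' s)"
  proof
    show "fst ` E \<subseteq> suslin (\<lambda>s. fst ` K' s)"
      unfolding E suslin_def I[symmetric] by blast
    show "suslin (\<lambda>s. fst ` K' s) \<subseteq> fst ` E"
    proof
      fix x assume "x \<in> suslin (\<lambda>s. fst ` K' s)"
      then obtain \<sigma> where "\<And>n. x \<in> fst ` K' (map \<sigma> [0..<Suc n])" by (auto simp: suslin_def)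
      then have "x \<in> fst ` (\<Inter>n. K' (map \<sigma> [0..<Suc n]))"
        by (intro fst_INT_compact cK' dec)
      then show "x \<in> fst ` E" unfolding E suslin_def I by blast
    qed
  qed
  also have "\<dots> \<in> sets lebesgue"
  proof (rule suslin_lebesgue)
    fix s
    have "closed (fst ` K' s)"
      by (intro compact_imp_closed compact_continuous_image cK' continuous_intros)
    then have "fst ` K' s \<in> sets borel" by (rule borel_closed)
    then show "fst ` K' s \<in> sets lebesgue" by simp
  qed
  finally show ?thesis .
qed

lemma supmin_measurable:
  fixes f g :: "'a::euclidean_space \<Rightarrow> ennreal"
  assumes f: "f \<in> borel_measurable borel" and g: "g \<in> borel_measurable borel"
  shows "supmin_conv f g \<in> borel_measurable lebesgue"
proof (rule borel_measurableI_greater)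
  fix y :: ennreal
  define E where "E = {p :: 'a \<times> 'a. y < f (snd p) \<and> y < g (fst p - snd p)}"
  have m1: "(\<lambda>p::'a\<times>'a. f (snd p)) \<in> borel_measurable borel"
    by (rule measurable_compose[OF borel_measurable_continuous_onI f]) (intro continuous_intros)
  have m2: "(\<lambda>p::'a\<times>'a. g (fst p - snd p)) \<in> borel_measurable borel"
    by (rule measurable_compose[OF borel_measurable_continuous_onI g]) (intro continuous_intros)
  have "E \<in> sets borel"
  proof -
    have "E = ((\<lambda>p::'a\<times>'a. f (snd p)) -` {y<..} \<inter> space borel) \<inter> ((\<lambda>p::'a\<times>'a. g (fst p - snd p)) -` {y<..} \<inter> space borel)"
      by (auto simp: E_def)
    also have "\<dots> \<in> sets borel"
      by (intro sets.Int measurable_sets[OF m1] measurable_sets[OF m2] borel_open open_greaterThan)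
    finally show ?thesis .
  qed
  then have "SuK E" using SuK_borel by blast
  then have "fst ` E \<in> sets lebesgue" by (rule SuK_fst_lebesgue)
  moreover have "{x \<in> space lebesgue. y < supmin_conv f g x} = fst ` E"
  proof (intro set_eqI iffI)
    fix x assume "x \<in> {x \<in> space lebesgue. y < supmin_conv f g x}"
    then obtain z where "y < min (f (x - z)) (g z)" by (auto simp: supmin_conv_def less_SUP_iff)
    then have "(x, x - z) \<in> E" by (auto simp: E_def)
    then show "x \<in> fst ` E" by force
  next
    fix x assume "x \<in> fst ` E"
    then obtain a where "(x, a) \<in> E" by force
    then have "y < min (f (x - (x - a))) (g (x - a))" by (auto simp: E_def)
    also have "min (f (x - (x - a))) (g (x - a)) \<le> supmin_conv f g x"
      unfolding supmin_conv_def by (rule SUP_upper) simp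
    finally show "x \<in> {x \<in> space lebesgue. y < supmin_conv f g x}" by simp
  qed
  ultimately show "{x \<in> space lebesgue. y < supmin_conv f g x} \<in> sets lebesgue" by simp
qed



lemma nn_integral_lebesgue_translate:
  fixes h :: "'a::euclidean_space \<Rightarrow> ennreal"
  assumes h: "h \<in> borel_measurable lebesgue"
  shows "(\<integral>\<^sup>+x. h (x + y) \<partial>lebesgue) = (\<integral>\<^sup>+x. h x \<partial>lebesgue)"
proof -
  have T: "(\<lambda>x. y + (\<Sum>j\<in>Basis. (1 * (x \<bullet> j)) *\<^sub>R j)) = (\<lambda>x::'a. y + x)"
    by (simp add: euclidean_representation)
  have eq: "lebesgue = density (distr lebesgue lebesgue (\<lambda>x::'a. y + x)) (\<lambda>_. 1)"
    using lebesgue_affine_euclidean[of "\<lambda>_. 1" y] unfolding T by simp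
  have mT: "(\<lambda>x::'a. y + x) \<in> lebesgue \<rightarrow>\<^sub>M lebesgue"
    using lebesgue_affine_measurable[of "\<lambda>_. 1" y] unfolding T by simp
  have "(\<integral>\<^sup>+x. h x \<partial>lebesgue) = (\<integral>\<^sup>+x. h x \<partial>density (distr lebesgue lebesgue (\<lambda>x::'a. y + x)) (\<lambda>_. 1))"
    by (subst eq) (rule refl)
  also have "\<dots> = (\<integral>\<^sup>+x. h x \<partial>distr lebesgue lebesgue (\<lambda>x::'a. y + x))"
    by (simp add: density_1)
  also have "\<dots> = (\<integral>\<^sup>+x. h (y + x) \<partial>lebesgue)"
    by (rule nn_integral_distr[OF mT]) (simp add: h)
  finally show ?thesis by (simp add: add.commute)
qed


lemma SUP_min_eq:
  fixes a :: ennreal and c :: "nat \<Rightarrow> ennreal"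
  assumes "a \<le> (SUP k. c k)"
  shows "(SUP k. min a (c k)) = a"
proof (rule antisym)
  show "(SUP k. min a (c k)) \<le> a" by (rule SUP_least) simp
  show "a \<le> (SUP k. min a (c k))"
  proof (rule ccontr)
    assume "\<not> a \<le> (SUP k. min a (c k))"
    then have lt: "(SUP k. min a (c k)) < a" by simp
    have "c k \<le> (SUP k. min a (c k))" for k
    proof -
      have "min a (c k) \<le> (SUP k. min a (c k))" by (rule SUP_upper) simp
      with lt show ?thesis by (auto simp: min_def split: if_splits)
    qed
    then have "(SUP k. c k) \<le> (SUP k. min a (c k))" by (rule SUP_least)
    with lt assms show False by simp
  qed
qed

lemma young_SUP:
  assumes y: "young_function \<phi>" and inc: "incseq a"
  shows "\<phi> (SUP k. a k) = (SUP k. \<phi> (a k))"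
proof -
  have mono: "mono \<phi>" using y by (simp add: young_function_def)
  define t where "t = (SUP k. a k)"
  have le: "a k \<le> t" for k unfolding t_def by (rule SUP_upper) simp
  show ?thesis unfolding t_def[symmetric]
  proof (rule antisym)
    show "(SUP k. \<phi> (a k)) \<le> \<phi> t" by (rule SUP_least) (rule monoD[OF mono le])
    show "\<phi> t \<le> (SUP k. \<phi> (a k))"
    proof (cases "\<exists>k. a k = t")
      case True
      then obtain k where "a k = t" by blast
      then have "\<phi> t = \<phi> (a k)" by simp
      also have "\<dots> \<le> (SUP k. \<phi> (a k))" by (rule SUP_upper) simp
      finally show ?thesis .
    next
      case False
      then have lt: "a k < t" for k using le[of k] by (auto simp: order.order_iff_strict)
      have t0: "t > 0" using lt[of 0] by (auto intro: order.strict_trans1)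
      have "a \<longlonglongrightarrow> t" unfolding t_def by (rule LIMSEQ_SUP[OF inc])
      then have fl: "filterlim a (at_left t) sequentially"
        by (rule tendsto_imp_filterlim_at_left) (simp add: lt)
      have "(\<phi> \<longlongrightarrow> \<phi> t) (at_left t)" using y t0 by (simp add: young_function_def)
      then have l1: "(\<lambda>k. \<phi> (a k)) \<longlonglongrightarrow> \<phi> t" by (rule filterlim_compose[OF _ fl])
      have "incseq (\<lambda>k. \<phi> (a k))" using inc mono by (auto simp: incseq_def monoD)
      then have l2: "(\<lambda>k. \<phi> (a k)) \<longlonglongrightarrow> (SUP k. \<phi> (a k))" by (rule LIMSEQ_SUP)
      from LIMSEQ_unique[OF l1 l2] show ?thesis by simp
    qed
  qed
qed

lemma mono_ennreal_measurable:
  fixes \<phi> :: "ennreal \<Rightarrow> ennreal"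
  assumes mono: "mono \<phi>"
  shows "\<phi> \<in> borel_measurable borel"
proof (rule borel_measurableI_greater)
  fix y
  define U where "U = {x. y < \<phi> x}"
  have up: "x \<in> U \<Longrightarrow> x \<le> x' \<Longrightarrow> x' \<in> U" for x x'
    using monoD[OF mono] by (auto simp: U_def intro: order.strict_trans2)
  have "U \<in> sets borel"
  proof (cases "Inf U \<in> U")
    case True
    then have "U = {Inf U..}" using up by (auto intro: Inf_lower)
    then show ?thesis by (metis borel_closed closed_atLeast)
  next
    case False
    have "U = {Inf U<..}"
    proof (intro set_eqI iffI)
      fix x assume "x \<in> U"
      then show "x \<in> {Inf U<..}" using False Inf_lower[of x U] by (auto simp: order.order_iff_strict)
    next
      fix x assume "x \<in> {Inf U<..}"
      then obtain u where "u \<in> U" "u < x" by (auto simp: Inf_less_iff)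
      then show "x \<in> U" using up by auto
    qed
    then show ?thesis by (metis borel_open open_greaterThan)
  qed
  then show "{x \<in> space borel. y < \<phi> x} \<in> sets borel" by (simp add: U_def)
qed

lemma lux_le:
  fixes f F :: "'a::euclidean_space \<Rightarrow> ennreal"
  assumes y: "young_function \<phi>" and f: "f \<in> borel_measurable lebesgue"
    and F: "F \<in> borel_measurable lebesgue"
    and c: "incseq c" and fc: "\<And>x. f x \<le> (SUP k. c k)"
    and tr: "\<And>k. \<exists>y. \<forall>x. min (f x) (c k) \<le> F (x + y)"
  shows "luxemburg \<phi> f \<le> luxemburg \<phi> F"
  unfolding luxemburg_def
proof (rule Inf_superset_mono, safe)
  fix r :: real
  assume r: "r > 0" and I: "(\<integral>\<^sup>+ x. \<phi> (F x / ennreal r) \<partial>lebesgue) \<le> 1"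
  have mono: "mono \<phi>" using y by (simp add: young_function_def)
  have \<phi>m[measurable]: "\<phi> \<in> borel_measurable borel" by (rule mono_ennreal_measurable[OF mono])
  note [measurable] = f F
  define u where "u k x = \<phi> (min (f x) (c k) / ennreal r)" for k x
  have um: "u k \<in> borel_measurable lebesgue" for k unfolding u_def by measurable
  have uinc: "incseq u"
    unfolding incseq_def le_fun_def u_def
    using c by (auto intro!: monoD[OF mono] divide_right_mono_ennreal min.mono simp: incseq_def)
  have pt: "\<phi> (f x / ennreal r) = (SUP k. u k x)" for x
  proof -
    have "f x / ennreal r = (SUP k. min (f x) (c k) / ennreal r)"
      using SUP_min_eq[OF fc[of x]] SUP_divide_ennreal[of "\<lambda>k. min (f x) (c k)" UNIV "ennreal r"] by simp
    also have "\<phi> \<dots> = (SUP k. u k x)" unfolding u_def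
      using c by (intro young_SUP[OF y]) (auto simp: incseq_def intro!: divide_right_mono_ennreal min.mono)
    finally show ?thesis by simp
  qed
  have "(\<integral>\<^sup>+ x. \<phi> (f x / ennreal r) \<partial>lebesgue) = (\<integral>\<^sup>+ x. (SUP k. u k x) \<partial>lebesgue)"
    by (simp add: pt)
  also have "\<dots> = (SUP k. integral\<^sup>N lebesgue (u k))"
    by (rule nn_integral_monotone_convergence_SUP[OF uinc um])
  also have "\<dots> \<le> 1"
  proof (rule SUP_least)
    fix k
    obtain y where yk: "\<And>x. min (f x) (c k) \<le> F (x + y)" using tr by blast
    have "integral\<^sup>N lebesgue (u k) \<le> (\<integral>\<^sup>+ x. \<phi> (F (x + y) / ennreal r) \<partial>lebesgue)"
      unfolding u_def by (intro nn_integral_mono monoD[OF mono] divide_right_mono_ennreal yk)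
    also have "\<dots> = (\<integral>\<^sup>+ x. \<phi> (F x / ennreal r) \<partial>lebesgue)"
      by (rule nn_integral_lebesgue_translate[where h="\<lambda>x. \<phi> (F x / ennreal r)"]) measurable
    also have "\<dots> \<le> 1" by (rule I)
    finally show "integral\<^sup>N lebesgue (u k) \<le> 1" .
  qed
  finally show "\<exists>r'. ennreal r = ennreal r' \<and> 0 < r' \<and> (\<integral>\<^sup>+ x. \<phi> (f x / ennreal r') \<partial>lebesgue) \<le> 1"
    using r by blast
qed



theorem lemma6:
  fixes \<phi> :: "ennreal \<Rightarrow> ennreal" and f g :: "'a::euclidean_space \<Rightarrow> ennreal"
  assumes "young_function \<phi>"
    and "f \<in> borel_measurable borel" and "g \<in> borel_measurable borel"
    and "(SUP x. f x) = (SUP x. g x)"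
  shows "supmin_conv f g \<in> borel_measurable lebesgue \<and>
         max (luxemburg \<phi> f) (luxemburg \<phi> g) \<le> luxemburg \<phi> (supmin_conv f g)"
proof -
  note y = assms(1) and sup = assms(4)
  have Fm: "supmin_conv f g \<in> borel_measurable lebesgue"
    by (rule supmin_measurable[OF assms(2,3)])
  have fl: "f \<in> borel_measurable lebesgue"
    using assms(2) by (simp add: measurable_completion)
  have gl: "g \<in> borel_measurable lebesgue"
    using assms(3) by (simp add: measurable_completion)
  have "luxemburg \<phi> f \<le> luxemburg \<phi> (supmin_conv f g)"
  proof -
    obtain c where c: "incseq c" "range c \<subseteq> range g" "Sup (range g) = Sup (range c)"
      using ennreal_Sup_countable_SUP[of "range g"] by auto
    show ?thesis
    proof (rule lux_le[OF y fl Fm c(1)])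
      fix x show "f x \<le> (SUP k. c k)"
        using sup c(3) by (metis SUP_upper UNIV_I)
    next
      fix k
      have "c k \<in> range g" using c(2) by blast
      then obtain y where yk: "c k = g y" by blast
      have "min (f x) (c k) \<le> supmin_conv f g (x + y)" for x
      proof -
        have "min (f (x + y - y)) (g y) \<le> supmin_conv f g (x + y)"
          unfolding supmin_conv_def by (rule SUP_upper) simp
        then show ?thesis by (simp add: yk)
      qed
      then show "\<exists>y. \<forall>x. min (f x) (c k) \<le> supmin_conv f g (x + y)" by blast
    qed
  qed
  moreover have "luxemburg \<phi> g \<le> luxemburg \<phi> (supmin_conv f g)"
  proof -
    obtain c where c: "incseq c" "range c \<subseteq> range f" "Sup (range f) = Sup (range c)"
      using ennreal_Sup_countable_SUP[of "range f"] by auto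
    show ?thesis
    proof (rule lux_le[OF y gl Fm c(1)])
      fix x show "g x \<le> (SUP k. c k)"
        using sup c(3) by (metis SUP_upper UNIV_I)
    next
      fix k
      have "c k \<in> range f" using c(2) by blast
      then obtain y where yk: "c k = f y" by blast
      have "min (g x) (c k) \<le> supmin_conv f g (x + y)" for x
      proof -
        have "min (f (x + y - x)) (g x) \<le> supmin_conv f g (x + y)"
          unfolding supmin_conv_def by (rule SUP_upper) simp
        then show ?thesis by (simp add: yk min.commute)
      qed
      then show "\<exists>y. \<forall>x. min (g x) (c k) \<le> supmin_conv f g (x + y)" by blast
    qed
  qed
  ultimately show ?thesis using Fm by simp
qed


end
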